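(* Let $P\subset\mathbb{R}^d$ be a polytope inscribed into a sphere centered at the origin and let $v$ be a vertex of $P$. Then the neighbors of $v$ in the graph of $P$ are exactly the points $s_W(v)$, where $W$ ranges over the walls of the normal cone $N_vP$.
   Context: The normal cone of a vertex $v$ is $N_vP=\{c\in\mathbb{R}^d: \langle c,v\rangle\ge\langle c,y\rangle \ \forall y\in P\}$. In the (full-dimensional) normal fan of $P$, a wall is a cone of dimension $d-1$; a wall of $N_vP$ is a $(d-1)$-dimensional face of it. For a wall $W$ with linear span $\{x:\langle\alpha,x\rangle=0\}$, $s_W(x)=x-2\frac{\langle\alpha,x\rangle}{\langle\alpha,\alpha\rangle}\alpha$ is the reflection in that hyperplane. *)

theory Defs
  imports "HOL-Analysis.Analysis"
begin

definition normal_cone :: "'a::euclidean_space set \<Rightarrow> 'a \<Rightarrow> 'a set" where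
  "normal_cone P v = {c. \<forall>y\<in>P. c \<bullet> y \<le> c \<bullet> v}"

definition is_wall :: "'a::euclidean_space set \<Rightarrow> 'a set \<Rightarrow> bool" where
  "is_wall C W \<longleftrightarrow> W face_of C \<and> aff_dim W = int DIM('a) - 1"

definition wall_reflection :: "'a::euclidean_space set \<Rightarrow> 'a \<Rightarrow> 'a" where
  "wall_reflection W x =
     (let \<alpha> = (SOME \<alpha>. \<alpha> \<noteq> 0 \<and> span W = {y. \<alpha> \<bullet> y = 0})
      in x - (2 * (\<alpha> \<bullet> x) / (\<alpha> \<bullet> \<alpha>)) *\<^sub>R \<alpha>)"

definition graph_neighbors :: "'a::euclidean_space set \<Rightarrow> 'a \<Rightarrow> 'a set" where
  "graph_neighbors P v =
     {u. u extreme_point_of P \<and> u \<noteq> v \<and> closed_segment v u face_of P}"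

end

theory Submission imports Defs begin

lemma perp_parallel:
  fixes a x :: "'a::euclidean_space"
  assumes "a \<noteq> 0" "\<And>h. a \<bullet> h = 0 \<Longrightarrow> h \<bullet> x = 0"
  shows "x = ((x \<bullet> a) / (a \<bullet> a)) *\<^sub>R a"
proof -
  define k where "k = (x \<bullet> a) / (a \<bullet> a)"
  define w where "w = x - k *\<^sub>R a"
  have aa: "a \<bullet> a \<noteq> 0" using assms(1) by simp
  have "a \<bullet> w = 0" unfolding w_def k_def using aa
    by (simp add: inner_diff_right inner_commute)
  then have wx: "w \<bullet> x = 0" using assms(2) by blast
  have "w \<bullet> w = w \<bullet> x - k * (w \<bullet> a)" unfolding w_def
    by (simp add: inner_diff_right algebra_simps inner_commute)
  also have "\<dots> = 0" using wx \<open>a \<bullet> w = 0\<close> by (simp add: inner_commute)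
  finally have "w = 0" by simp
  then show ?thesis unfolding w_def k_def by simp
qed

lemma hyperplane_affine_hull:
  fixes a :: "'a::euclidean_space"
  assumes "W \<subseteq> {x. a \<bullet> x = 0}" "a \<noteq> 0" "aff_dim W = int DIM('a) - 1"
  shows "affine hull W = {x. a \<bullet> x = 0}"
proof -
  have "W \<noteq> {}"
  proof
    assume "W = {}"
    then have "int DIM('a) = 0" using assms(3) by simp
    then show False by simp
  qed
  have sub: "affine hull W \<subseteq> {x. a \<bullet> x = 0}"
    by (intro hull_minimal assms(1) affine_hyperplane)
  show "affine hull W = {x. a \<bullet> x = 0}"
    apply (rule affine_dim_equal)
    using sub assms \<open>W \<noteq> {}\<close> by (auto simp: affine_hyperplane)
qed

lemma line_sphere:
  fixes a v z u :: "'a::euclidean_space"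
  assumes "a \<noteq> 0" "z - v = k *\<^sub>R a" "u - v = m *\<^sub>R a"
    "norm z = norm v" "norm u = norm v" "u \<noteq> v"
  shows "z = v \<or> z = u"
proof -
  have aa: "a \<bullet> a \<noteq> 0" using assms(1) by simp
  have gen: "t = 0 \<or> t = - 2 * (a \<bullet> v) / (a \<bullet> a)" if "norm (v + t *\<^sub>R a) = norm v" for t
  proof -
    have "(v + t *\<^sub>R a) \<bullet> (v + t *\<^sub>R a) = v \<bullet> v" using that by (simp add: dot_square_norm)
    then have "t * (2 * (a \<bullet> v) + t * (a \<bullet> a)) = 0"
      by (simp add: inner_add_left inner_add_right algebra_simps inner_commute)
    then have "t = 0 \<or> 2 * (a \<bullet> v) + t * (a \<bullet> a) = 0" by simp
    then show ?thesis using aa by (auto simp: field_simps)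
  qed
  have z: "z = v + k *\<^sub>R a" and u: "u = v + m *\<^sub>R a" using assms(2,3) by (simp_all add: algebra_simps)
  have "m \<noteq> 0" using u assms(6) by auto
  then have m: "m = - 2 * (a \<bullet> v) / (a \<bullet> a)" using gen[of m] u assms(5) by auto
  have "k = 0 \<or> k = m" using gen[of k] z assms(4) m by auto
  then show ?thesis using z u by auto
qed

lemma hyperplane_span:
  fixes a :: "'a::euclidean_space"
  assumes "W \<subseteq> {x. a \<bullet> x = 0}" "a \<noteq> 0" "aff_dim W = int DIM('a) - 1"
  shows "span W = {x. a \<bullet> x = 0}"
proof -
  have "W \<noteq> {}"
  proof
    assume "W = {}"
    then have "int DIM('a) = 0" using assms(3) by simp
    then show False by simp
  qed
  have sub: "affine hull W \<subseteq> {x. a \<bullet> x = 0}"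
    by (intro hull_minimal assms(1) affine_hyperplane)
  have "affine hull W = {x. a \<bullet> x = 0}"
    apply (rule affine_dim_equal)
    using sub assms \<open>W \<noteq> {}\<close> by (auto simp: affine_hyperplane)
  then have "{x. a \<bullet> x = 0} \<subseteq> span W" using affine_hull_subset_span by metis
  moreover have "span W \<subseteq> {x. a \<bullet> x = 0}"
    using span_mono[OF assms(1)] subspace_hyperplane span_eq_iff by metis
  ultimately show ?thesis by blast
qed

lemma reflection_eq:
  fixes a u v :: "'a::euclidean_space"
  assumes "span W = {y. a \<bullet> y = 0}" "a \<noteq> 0" "u \<noteq> v" "norm u = norm v"
    and "\<And>h. a \<bullet> h = 0 \<Longrightarrow> h \<bullet> (u - v) = 0"
  shows "wall_reflection W v = u"
proof -
  define \<alpha> where "\<alpha> = (SOME \<alpha>. \<alpha> \<noteq> 0 \<and> span W = {y. \<alpha> \<bullet> y = 0})"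
  have "\<alpha> \<noteq> 0 \<and> span W = {y. \<alpha> \<bullet> y = 0}" unfolding \<alpha>_def
    by (rule someI[of _ a]) (use assms in auto)
  then have al: "\<alpha> \<noteq> 0" "span W = {y. \<alpha> \<bullet> y = 0}" by auto
  have "\<And>h. \<alpha> \<bullet> h = 0 \<Longrightarrow> h \<bullet> (u - v) = 0"
    using al(2) assms(1,5) by blast
  from perp_parallel[OF al(1) this]
  obtain k where k: "u - v = k *\<^sub>R \<alpha>" by blast
  have u: "u = v + k *\<^sub>R \<alpha>" using k by (simp add: algebra_simps)
  have aa: "\<alpha> \<bullet> \<alpha> \<noteq> 0" using al by simp
  have "k \<noteq> 0" using k assms(3) by auto
  have "u \<bullet> u = v \<bullet> v" using assms(4) by (simp add: dot_square_norm)
  then have "2 * k * (\<alpha> \<bullet> v) + k * k * (\<alpha> \<bullet> \<alpha>) = 0"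
    unfolding u by (simp add: inner_add_left inner_add_right algebra_simps inner_commute)
  then have "2 * (\<alpha> \<bullet> v) + k * (\<alpha> \<bullet> \<alpha>) = 0" using \<open>k \<noteq> 0\<close>
    by (metis (no_types, lifting) mult.assoc distrib_left mult_eq_0_iff mult.commute)
  then have "2 * (\<alpha> \<bullet> v) / (\<alpha> \<bullet> \<alpha>) = - k" using aa by (simp add: field_simps)
  then show ?thesis unfolding wall_reflection_def Let_def \<alpha>_def[symmetric] using u by simp
qed


theorem corollary2p3:
  fixes P :: "'a::euclidean_space set" and v :: 'a and r :: real
  assumes "polytope P"
    and "\<And>w. w extreme_point_of P \<Longrightarrow> norm w = r"
    and "v extreme_point_of P"
  shows "graph_neighbors P v =
           {wall_reflection W v | W. is_wall (normal_cone P v) W}"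
proof -
  define V where "V = {x. x extreme_point_of P}"
  obtain S where S: "finite S" "P = convex hull S" using assms(1) unfolding polytope_def by blast
  have "V \<subseteq> S" unfolding V_def S(2) using extreme_points_of_convex_hull by blast
  then have finV: "finite V" using S(1) finite_subset by blast
  have PV: "P = convex hull V" unfolding V_def
    by (rule Krein_Milman_Minkowski) (simp_all add: assms(1) polytope_imp_compact polytope_imp_convex)
  have VP: "V \<subseteq> P" unfolding PV by (rule hull_subset)
  have vV: "v \<in> V" using assms(3) V_def by simp
  have normV: "\<And>y. y \<in> V \<Longrightarrow> norm y = r" using assms(2) V_def by simp
  define N where "N = (\<Inter>y\<in>V. {c. (y - v) \<bullet> c \<le> 0})"
  have NC: "normal_cone P v = N"
  proof
    show "normal_cone P v \<subseteq> N"
    proof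
      fix c assume c: "c \<in> normal_cone P v"
      have "(y - v) \<bullet> c \<le> 0" if "y \<in> V" for y
      proof -
        have "c \<bullet> y \<le> c \<bullet> v" using c that VP unfolding normal_cone_def by blast
        then show ?thesis by (simp add: inner_commute[of "y - v" c] inner_diff_right)
      qed
      then show "c \<in> N" unfolding N_def by blast
    qed
    show "N \<subseteq> normal_cone P v"
    proof
      fix c assume "c \<in> N"
      then have "V \<subseteq> {y. c \<bullet> y \<le> c \<bullet> v}"
      proof (intro subsetI CollectI)
        fix y assume "c \<in> N" "y \<in> V"
        then have "(y - v) \<bullet> c \<le> 0" unfolding N_def by blast
        then show "c \<bullet> y \<le> c \<bullet> v" by (simp add: inner_commute[of "y - v" c] inner_diff_right)
      qed
      then have "convex hull V \<subseteq> {y. c \<bullet> y \<le> c \<bullet> v}" by (rule hull_minimal) (rule convex_halfspace_le)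
      then show "c \<in> normal_cone P v" unfolding normal_cone_def PV by auto
    qed
  qed
  have convN: "convex N" unfolding N_def by (intro convex_INT convex_halfspace_le)
  have polyN: "polyhedron N" unfolding N_def
    by (intro polyhedron_Inter finite_imageI finV) (auto intro: polyhedron_halfspace_le)
  have openU: "\<And>Y. finite Y \<Longrightarrow> open (\<Inter>y\<in>Y. {c. (y - v) \<bullet> c < 0})"
    by (intro open_INT ballI open_halfspace_lt)
  have convP: "convex P" using assms(1) polytope_imp_convex by blast
  show ?thesis
  proof
    show "graph_neighbors P v \<subseteq> {wall_reflection W v | W. is_wall (normal_cone P v) W}"
    proof
      fix u assume "u \<in> graph_neighbors P v"
      then have uE: "u extreme_point_of P" "u \<noteq> v" and T: "closed_segment v u face_of P"
        by (auto simp: graph_neighbors_def)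
      have uV: "u \<in> V" using uE V_def by simp
      have extT: "y = v \<or> y = u" if "y \<in> V" "y \<in> closed_segment v u" for y
        using extreme_point_of_face[OF T, of y] extreme_point_of_convex_hull_2[of y v u]
          segment_convex_hull[of v u] that V_def by auto
      obtain c where c1: "\<And>y. y \<in> V - {v,u} \<Longrightarrow> (y - v) \<bullet> c < 0" and c2: "(u - v) \<bullet> c = 0"
      proof -
        have "closed_segment v u exposed_face_of P"
          using exposed_face_of_polyhedron polytope_imp_polyhedron assms(1) T by blast
        then consider "closed_segment v u = P"
          | a b where "a \<noteq> 0" "P \<subseteq> {x. a \<bullet> x \<le> b}" "closed_segment v u = P \<inter> {x. a \<bullet> x = b}"
          unfolding exposed_face_of by auto
        then show ?thesis
        proof cases
          case 1
          then have "V - {v,u} = {}" using extT VP by auto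
          then show ?thesis using that[of 0] by auto
        next
          case 2
          have ab: "a \<bullet> v = b" "a \<bullet> u = b" using 2(3) ends_in_segment by blast+
          show ?thesis
          proof (rule that[of a])
            fix y assume y: "y \<in> V - {v,u}"
            have "y \<in> P" using y VP by blast
            then have "a \<bullet> y \<le> b" using 2 by auto
            moreover have "a \<bullet> y \<noteq> b"
            proof
              assume "a \<bullet> y = b"
              then have "y \<in> closed_segment v u" using 2(3) \<open>y \<in> P\<close> by auto
              then show False using extT y by auto
            qed
            ultimately show "(y - v) \<bullet> a < 0" using ab by (simp add: inner_diff_left inner_diff_right inner_commute)
          next
            show "(u - v) \<bullet> a = 0" using ab by (simp add: inner_diff_left inner_diff_right inner_commute)
          qed
        qed
      qed
      define a where "a = u - v"
      have a0: "a \<noteq> 0" using uE a_def by simp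
      define W where "W = N \<inter> {x. a \<bullet> x = 0}"
      have WF: "W face_of N" unfolding W_def
        by (rule face_of_Int_supporting_hyperplane_le[OF convN]) (use uV in \<open>auto simp: N_def a_def\<close>)
      define U where "U = (\<Inter>y\<in>V-{v,u}. {x. (y - v) \<bullet> x < 0})"
      have oU: "open U" unfolding U_def using finV openU by blast
      have cU: "c \<in> U" unfolding U_def using c1 by blast
      have HU: "{x. a \<bullet> x = 0} \<inter> U \<subseteq> W"
      proof
        fix x assume x: "x \<in> {x. a \<bullet> x = 0} \<inter> U"
        have "(y - v) \<bullet> x \<le> 0" if "y \<in> V" for y
        proof (cases "y \<in> {v,u}")
          case True then show ?thesis using x a_def by (auto simp: inner_commute)
        next
          case False then show ?thesis using x that unfolding U_def by force
        qed
        then show "x \<in> W" using x unfolding W_def N_def by auto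
      qed
      have "aff_dim ({x. a \<bullet> x = 0} \<inter> U) = aff_dim {x. a \<bullet> x = 0}"
      proof (rule aff_dim_convex_Int_open)
        show "convex {x. a \<bullet> x = 0}" by (rule convex_hyperplane)
        show "open U" by (rule oU)
        have "a \<bullet> c = 0" using c2 a_def by (simp add: inner_commute)
        then show "{x. a \<bullet> x = 0} \<inter> U \<noteq> {}" using cU by blast
      qed
      then have "aff_dim W \<ge> int DIM('a) - 1" using aff_dim_subset[OF HU] a0 by simp
      moreover have "aff_dim W \<le> int DIM('a) - 1"
        using aff_dim_subset[of W "{x. a \<bullet> x = 0}"] a0 unfolding W_def by auto
      ultimately have adW: "aff_dim W = int DIM('a) - 1" by simp
      have wall: "is_wall (normal_cone P v) W" unfolding is_wall_def NC using WF adW by simp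
      have "span W = {x. a \<bullet> x = 0}"
        by (rule hyperplane_span) (use a0 adW W_def in auto)
      then have "wall_reflection W v = u"
        by (rule reflection_eq) (use a0 uE normV uV vV a_def in \<open>auto simp: inner_commute\<close>)
      then show "u \<in> {wall_reflection W v | W. is_wall (normal_cone P v) W}" using wall by blast
    qed
  next
    show "{wall_reflection W v | W. is_wall (normal_cone P v) W} \<subseteq> graph_neighbors P v"
    proof
      fix x assume "x \<in> {wall_reflection W v | W. is_wall (normal_cone P v) W}"
      then obtain W where x: "x = wall_reflection W v" and WF: "W face_of N"
        and adW: "aff_dim W = int DIM('a) - 1" by (auto simp: is_wall_def NC)
      obtain c0 where c0: "\<And>y. y \<in> V - {v} \<Longrightarrow> (y - v) \<bullet> c0 < 0"
      proof -
        have "{v} exposed_face_of P"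
          using exposed_face_of_polyhedron polytope_imp_polyhedron assms(1,3) face_of_singleton by blast
        then consider "{v} = P"
          | a b where "a \<noteq> 0" "P \<subseteq> {x. a \<bullet> x \<le> b}" "{v} = P \<inter> {x. a \<bullet> x = b}"
          unfolding exposed_face_of by auto
        then show ?thesis
        proof cases
          case 1
          then have "V - {v} = {}" using VP by auto
          then show ?thesis using that[of 0] by auto
        next
          case 2
          have ab: "a \<bullet> v = b" using 2(3) by blast
          show ?thesis
          proof (rule that[of a])
            fix y assume y: "y \<in> V - {v}"
            have "y \<in> P" using y VP by blast
            then have "a \<bullet> y \<le> b" using 2 by auto
            moreover have "a \<bullet> y \<noteq> b" using 2(3) \<open>y \<in> P\<close> y by auto
            ultimately show "(y - v) \<bullet> a < 0" using ab by (simp add: inner_diff_left inner_diff_right inner_commute)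
          qed
        qed
      qed
      define U0 where "U0 = (\<Inter>y\<in>V-{v}. {x. (y - v) \<bullet> x < 0})"
      have oU0: "open U0" unfolding U0_def using finV openU by blast
      have U0N: "U0 \<subseteq> N"
      proof
        fix x assume x: "x \<in> U0"
        have "(y - v) \<bullet> x \<le> 0" if "y \<in> V" for y
          using x that unfolding U0_def by (cases "y = v") force+
        then show "x \<in> N" unfolding N_def by auto
      qed
      have "c0 \<in> U0" unfolding U0_def using c0 by blast
      then have "aff_dim U0 = int DIM('a)" using aff_dim_open[OF oU0] by auto
      then have adN: "aff_dim N = int DIM('a)"
        using aff_dim_subset[OF U0N] aff_dim_le_DIM[of N] by simp
      have Wne: "W \<noteq> {}"
      proof
        assume "W = {}"
        then have "int DIM('a) = 0" using adW by simp
        then show False by simp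
      qed
      have "W facet_of N" unfolding facet_of_def using WF Wne adW adN by simp
      then obtain a b where a0: "a \<noteq> 0" and Nab: "N \<subseteq> {x. a \<bullet> x \<le> b}" and Wab: "W = N \<inter> {x. a \<bullet> x = b}"
        using facet_of_polyhedron[OF polyN] by blast
      have "0 \<in> N" unfolding N_def by simp
      then have "0 \<le> b" using Nab by auto
      obtain w where w: "w \<in> W" using Wne by blast
      have "2 *\<^sub>R w \<in> N" using w Wab unfolding N_def by auto
      then have "2 * b \<le> b" using Nab w Wab by auto
      then have b0: "b = 0" using \<open>0 \<le> b\<close> by simp
      have WH: "W \<subseteq> {x. a \<bullet> x = 0}" using Wab b0 by auto
      have WN: "W \<subseteq> N" using Wab by auto
      have affW: "affine hull W = {x. a \<bullet> x = 0}" by (rule hyperplane_affine_hull[OF WH a0 adW])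
      have spW: "span W = {x. a \<bullet> x = 0}" by (rule hyperplane_span[OF WH a0 adW])
      have "rel_interior W \<noteq> {}" using Wne face_of_imp_convex[OF WF] rel_interior_eq_empty by blast
      then obtain c where cW: "c \<in> rel_interior W" by blast
      then obtain e where e: "e > 0" "ball c e \<inter> {x. a \<bullet> x = 0} \<subseteq> W"
        using mem_rel_interior_ball affW by metis
      have cW': "c \<in> W" using cW rel_interior_subset by blast
      have ac: "a \<bullet> c = 0" using cW' WH by auto
      have perp: "h \<bullet> (y - v) = 0" if y: "y \<in> V" "(y - v) \<bullet> c = 0" and h: "a \<bullet> h = 0" for y h
      proof (cases "h = 0")
        case True then show ?thesis by simp
      next
        case False
        define t where "t = e / (2 * norm h)"
        have t: "t > 0" using e False t_def by simp
        have tn: "norm (t *\<^sub>R h) < e" using e False t_def by simp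
        have "c + t *\<^sub>R h \<in> W" "c - t *\<^sub>R h \<in> W"
          using e(2) tn ac h by (auto simp: dist_norm inner_add_right inner_diff_right)
        then have "(y - v) \<bullet> (c + t *\<^sub>R h) \<le> 0" "(y - v) \<bullet> (c - t *\<^sub>R h) \<le> 0"
          using WN y(1) unfolding N_def by auto
        then have "t * ((y - v) \<bullet> h) \<le> 0" "- (t * ((y - v) \<bullet> h)) \<le> 0"
          using y(2) by (auto simp: inner_add_right inner_diff_right)
        then have "t * ((y - v) \<bullet> h) = 0" by linarith
        then show ?thesis using t by (simp add: inner_commute)
      qed
      have "\<exists>u\<in>V. u \<noteq> v \<and> (u - v) \<bullet> c = 0"
      proof (rule ccontr)
        assume "\<not> ?thesis"
        then have "\<And>y. y \<in> V - {v} \<Longrightarrow> (y - v) \<bullet> c < 0"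
          using cW' WN unfolding N_def by force
        then have "c \<in> U0" unfolding U0_def by blast
        then have "c \<in> interior N" using oU0 U0N interior_maximal by blast
        then have "c \<in> rel_interior N" using interior_subset_rel_interior by blast
        moreover have "W \<noteq> N" using adW adN by auto
        ultimately show False using face_of_disjoint_rel_interior[OF WF] cW' by blast
      qed
      then obtain u where uV: "u \<in> V" and uv: "u \<noteq> v" and uc: "(u - v) \<bullet> c = 0" by blast
      have nuv: "norm u = norm v" using normV uV vV by simp
      have "wall_reflection W v = u"
        by (rule reflection_eq[OF spW a0 uv nuv]) (use perp uV uc in blast)
      then have xu: "x = u" using x by simp
      define F where "F = P \<inter> {y. c \<bullet> y = c \<bullet> v}"
      have cN: "c \<in> normal_cone P v" using cW' WN NC by blast
      have FP: "F face_of P" unfolding F_def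
        by (rule face_of_Int_supporting_hyperplane_le[OF convP]) (use cN in \<open>auto simp: normal_cone_def\<close>)
      have vF: "v \<in> F" "u \<in> F" using VP vV uV uc unfolding F_def
        by (auto simp: inner_diff_left inner_diff_right inner_commute)
      have "F = closed_segment v u"
      proof
        show "closed_segment v u \<subseteq> F"
          using vF face_of_imp_convex[OF FP] convex_contains_segment by blast
        have polF: "polytope F" using face_of_polytope_polytope[OF assms(1) FP] .
        have "F = convex hull {z. z extreme_point_of F}"
          by (rule Krein_Milman_Minkowski) (use polF polytope_imp_compact polytope_imp_convex in auto)
        moreover have "{z. z extreme_point_of F} \<subseteq> {v, u}"
        proof
          fix z assume "z \<in> {z. z extreme_point_of F}"
          then have z: "z extreme_point_of P" "z \<in> F" using extreme_point_of_face[OF FP] by auto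
          have zV: "z \<in> V" using z V_def by simp
          have zc: "(z - v) \<bullet> c = 0" using z(2) unfolding F_def by (simp add: inner_diff_left inner_diff_right inner_commute)
          have "z - v = ((z - v) \<bullet> a / (a \<bullet> a)) *\<^sub>R a"
            by (rule perp_parallel[OF a0]) (use perp zV zc in blast)
          moreover have "u - v = ((u - v) \<bullet> a / (a \<bullet> a)) *\<^sub>R a"
            by (rule perp_parallel[OF a0]) (use perp uV uc in blast)
          ultimately have "z = v \<or> z = u"
            using line_sphere[OF a0 _ _ _ nuv uv] normV zV vV by metis
          then show "z \<in> {v, u}" by auto
        qed
        ultimately show "F \<subseteq> closed_segment v u"
          using hull_mono segment_convex_hull by metis
      qed
      then have "closed_segment v u face_of P" using FP by simp
      then show "x \<in> graph_neighbors P v"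
        unfolding graph_neighbors_def xu using uV uv V_def by simp
    qed
  qed
qed

end
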